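(* Let $S>0$, $\zeta\in\{0,1\}$, $\phi\in(-1,1)$, and let $(u_n)_{n\in\mathbb{N}}$ be the $\phi$-market impact scenario defined below. Then there exists $R>0$ such that for all $x\in(-R,R)$ the scenario is regular ($N(x)=+\infty$ where $N(x)=\inf\{n: s_n(x)=-S\}$), the function $x\mapsto\sum_{n\ge0}u_n(x)$ is given by a power series on $(-R,R)$ (in particular it is $\mathcal{C}^\infty$ there), and $$\sum_{n=0}^{+\infty}u_n(x)=\frac{1}{1-\phi}\,x+\frac{1}{S}\,\frac{(1+\zeta)\phi}{(1-\phi)^3(1+\phi)}\,x^2+o(x^2)\quad\text{as }x\to0.$$
   Context: Fix $S>0$, $\zeta\in\{0,1\}$ and $\phi\in\mathbb{R}$. For $a,b\in\mathbb{R}$ write $a\vee b=\max(a,b)$. The $\phi$-market impact scenario starting from $x\in\mathbb{R}$ is the sequence of real-valued functions $(u_n)_{n\in\mathbb{N}}$ defined by $u_0(x)=x\vee(-S)$ and, for all $n\in\mathbb{N}$, $u_{n+1}(x)=\Big(\phi\big(1+\tfrac{s_n(x)}{S}\big)^{1+\zeta}u_n(x)\Big)\vee\big(-s_n(x)-S\big)$, where $s_n(x)=\sum_{k=0}^n u_k(x)$. *)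

theory Defs
  imports "HOL-Analysis.Analysis" "HOL-Library.Landau_Symbols"
begin

primrec mis :: "real \<Rightarrow> nat \<Rightarrow> real \<Rightarrow> real \<Rightarrow> nat \<Rightarrow> real \<times> real" where
  "mis S \<zeta> \<phi> x 0 = (max x (-S), max x (-S))"
| "mis S \<zeta> \<phi> x (Suc n) =
     (let u = fst (mis S \<zeta> \<phi> x n); s = snd (mis S \<zeta> \<phi> x n);
          u' = max (\<phi> * (1 + s / S) ^ (1 + \<zeta>) * u) (- s - S)
      in (u', s + u'))"

definition scen_u :: "real \<Rightarrow> nat \<Rightarrow> real \<Rightarrow> real \<Rightarrow> nat \<Rightarrow> real" where
  "scen_u S \<zeta> \<phi> x n = fst (mis S \<zeta> \<phi> x n)"

definition scen_s :: "real \<Rightarrow> nat \<Rightarrow> real \<Rightarrow> real \<Rightarrow> nat \<Rightarrow> real" where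
  "scen_s S \<zeta> \<phi> x n = snd (mis S \<zeta> \<phi> x n)"

lemma scen_s_eq_sum: "scen_s S \<zeta> \<phi> x n = (\<Sum>k\<le>n. scen_u S \<zeta> \<phi> x k)"
  by (induction n) (simp_all add: scen_s_def scen_u_def Let_def)

definition scen_regular :: "real \<Rightarrow> nat \<Rightarrow> real \<Rightarrow> real \<Rightarrow> bool" where
  "scen_regular S \<zeta> \<phi> x \<longleftrightarrow> (\<forall>n. scen_s S \<zeta> \<phi> x n \<noteq> - S)"

end

theory Submission
  imports Defs "HOL-Complex_Analysis.Cauchy_Integral_Formula"
begin


primrec W :: "real \<Rightarrow> nat \<Rightarrow> real \<Rightarrow> 'a::real_normed_field \<Rightarrow> nat \<Rightarrow> 'a \<times> 'a" where
  "W S m \<phi> z 0 = (z, z)"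
| "W S m \<phi> z (Suc n) = (let u = fst (W S m \<phi> z n); s = snd (W S m \<phi> z n);
      u' = of_real \<phi> * (1 + s / of_real S) ^ m * u in (u', s + u'))"

abbreviation "WU S m \<phi> z n \<equiv> fst (W S m \<phi> z n)"
abbreviation "WS S m \<phi> z n \<equiv> snd (W S m \<phi> z n)"

lemma W_Suc: "WU S m \<phi> z (Suc n) = of_real \<phi> * (1 + WS S m \<phi> z n / of_real S)^m * WU S m \<phi> z n"
  "WS S m \<phi> z (Suc n) = WS S m \<phi> z n + WU S m \<phi> z (Suc n)"
  by (simp_all add: Let_def)

declare W.simps(2)[simp del]

lemma W_0: "WU S m \<phi> z 0 = z" "WS S m \<phi> z 0 = z" by simp_all

lemma WS_sum: "WS S m \<phi> z n = (\<Sum>k\<le>n. WU S m \<phi> z k)"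
  by (induction n) (simp_all add: W_Suc)

lemma W_bound:
  fixes z :: "'a::real_normed_field"
  assumes S: "S > 0" and phi: "\<bar>\<phi>\<bar> < 1" and m: "m \<le> 2"
  and z: "norm z \<le> S * (1 - \<bar>\<phi>\<bar>) / 6 * (1 - (1 + \<bar>\<phi>\<bar>)/2)"
  shows "norm (WU S m \<phi> z n) \<le> norm z * ((1 + \<bar>\<phi>\<bar>)/2)^n \<and>
         norm (WS S m \<phi> z n) \<le> norm z * (1 - ((1+\<bar>\<phi>\<bar>)/2)^Suc n) / (1 - (1+\<bar>\<phi>\<bar>)/2)"
proof (induction n)
  case 0 then show ?case using phi by simp
next
  case (Suc n)
  define q where "q = (1+\<bar>\<phi>\<bar>)/2"
  define \<delta> where "\<delta> = S * (1-\<bar>\<phi>\<bar>)/6"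
  have q1: "q < 1" "0 \<le> q" "\<bar>\<phi>\<bar> \<le> q" using phi by (auto simp: q_def)
  have d0: "0 \<le> \<delta>" "\<delta> / S \<le> 1" using phi S by (auto simp: \<delta>_def)
  have z': "norm z \<le> \<delta> * (1 - q)" using z by (simp add: q_def \<delta>_def)
  have IHu: "norm (WU S m \<phi> z n) \<le> norm z * q^n" and IHs: "norm (WS S m \<phi> z n) \<le> norm z * (1 - q^Suc n) / (1 - q)"
    using Suc by (simp_all add: q_def)
  have "norm z * (1 - q^Suc n) / (1 - q) \<le> norm z / (1-q)"
  proof (rule divide_right_mono)
    have "0 \<le> q^Suc n" using q1 by simp
    then show "norm z * (1 - q^Suc n) \<le> norm z" by (intro mult_left_le) auto
  qed (use q1 in simp)
  also have "\<dots> \<le> \<delta>" using z' q1 by (simp add: pos_divide_le_eq)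
  finally have sb: "norm (WS S m \<phi> z n) \<le> \<delta>" using IHs by linarith
  have "norm (1 + WS S m \<phi> z n / of_real S) \<le> 1 + norm (WS S m \<phi> z n) / S"
    using S by (metis abs_of_pos norm_divide norm_of_real norm_one norm_triangle_ineq)
  also have "\<dots> \<le> 1 + \<delta> / S" using sb S by (simp add: divide_right_mono)
  finally have nb: "norm (1 + WS S m \<phi> z n / of_real S) \<le> 1 + \<delta> / S" .
  have "norm ((1 + WS S m \<phi> z n / of_real S)^m) \<le> (1 + \<delta>/S)^m"
    unfolding norm_power by (rule power_mono[OF nb]) simp
  also have "\<dots> \<le> (1 + \<delta>/S)^2" using m d0 S by (intro power_increasing) auto
  also have "\<dots> \<le> 1 + 3 * (\<delta>/S)" proof -
    have "(\<delta>/S) * (\<delta>/S) \<le> \<delta>/S" using d0 S by (intro mult_left_le_one_le) auto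
    moreover have "(1 + \<delta>/S)^2 = 1 + 2*(\<delta>/S) + (\<delta>/S) * (\<delta>/S)" by (simp add: power2_eq_square algebra_simps)
    ultimately show ?thesis by linarith
  qed
  finally have pb: "norm ((1 + WS S m \<phi> z n / of_real S)^m) \<le> 1 + 3 * (\<delta>/S)" .
  have fq: "\<bar>\<phi>\<bar> * (1 + 3 * (\<delta>/S)) \<le> q"
  proof -
    have "\<bar>\<phi>\<bar> * (1 + 3 * (\<delta>/S)) = \<bar>\<phi>\<bar> + \<bar>\<phi>\<bar> * (1 - \<bar>\<phi>\<bar>)/2" using S by (simp add: \<delta>_def field_simps)
    also have "\<dots> \<le> \<bar>\<phi>\<bar> + (1 - \<bar>\<phi>\<bar>)/2" using phi by (simp add: mult_left_le_one_le)
    finally show ?thesis by (simp add: q_def field_simps)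
  qed
  have "norm (WU S m \<phi> z (Suc n)) = \<bar>\<phi>\<bar> * norm ((1 + WS S m \<phi> z n / of_real S)^m) * norm (WU S m \<phi> z n)"
    by (simp add: W_Suc norm_mult)
  also have "\<dots> \<le> \<bar>\<phi>\<bar> * (1 + 3 * (\<delta>/S)) * (norm z * q^n)"
    using d0 S by (intro mult_mono pb IHu mult_left_mono) auto
  also have "\<dots> \<le> q * (norm z * q^n)" by (rule mult_right_mono[OF fq]) (use q1 in simp)
  finally have ub0: "norm (WU S m \<phi> z (Suc n)) \<le> q * (norm z * q^n)" .
  have e: "q * (norm z * q^n) = norm z * q^Suc n" by (simp add: mult.commute mult.left_commute)
  have ub: "norm (WU S m \<phi> z (Suc n)) \<le> norm z * q ^ Suc n" using ub0 unfolding e .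
  have "norm (WS S m \<phi> z (Suc n)) \<le> norm (WS S m \<phi> z n) + norm (WU S m \<phi> z (Suc n))"
    by (simp add: W_Suc(2) norm_triangle_ineq)
  also have "\<dots> \<le> norm z * (1 - q^Suc n) / (1 - q) + norm z * q ^ Suc n" using IHs ub by linarith
  also have "\<dots> = norm z * (1 - q^Suc (Suc n)) / (1 - q)" using q1 by (simp add: divide_simps) (simp add: algebra_simps)
  finally show ?case using ub by (simp add: q_def)
qed



lemma geo_bound:
  fixes a :: "nat \<Rightarrow> real"
  assumes "\<And>n. \<bar>a n\<bar> \<le> B * p^n" "0 \<le> p" "p < 1"
  shows "summable a" "\<bar>suminf a\<bar> \<le> B / (1-p)"
proof -
  have sg: "summable (\<lambda>n. B * p^n)" using assms by (intro summable_mult summable_geometric) auto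
  show sa: "summable a" by (rule summable_comparison_test[OF _ sg]) (use assms in auto)
  have sabs: "summable (\<lambda>n. \<bar>a n\<bar>)" by (rule summable_comparison_test[OF _ sg]) (use assms in auto)
  have "\<bar>suminf a\<bar> \<le> (\<Sum>n. \<bar>a n\<bar>)" by (rule summable_rabs[OF sabs])
  also have "\<dots> \<le> (\<Sum>n. B * p^n)" by (rule suminf_le[OF _ sabs sg]) (use assms in auto)
  also have "\<dots> = B / (1-p)" using assms by (simp add: suminf_mult suminf_geometric divide_simps)
  finally show "\<bar>suminf a\<bar> \<le> B / (1-p)" .
qed

lemma small_o_from_cubic:
  fixes g :: "real \<Rightarrow> real"
  assumes "r > 0" "\<And>x. \<bar>x\<bar> < r \<Longrightarrow> \<bar>g x\<bar> \<le> C * \<bar>x\<bar>^3"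
  shows "g \<in> o[at 0](\<lambda>x. x^2)"
proof (rule landau_o.smallI)
  fix c :: real assume c: "c > 0"
  define d where "d = min r (c / (\<bar>C\<bar> + 1))"
  have d: "d > 0" using c assms by (simp add: d_def)
  have "\<forall>x. x \<noteq> 0 \<and> dist x 0 < d \<longrightarrow> norm (g x) \<le> c * norm (x^2)"
  proof (intro allI impI)
    fix x :: real assume x: "x \<noteq> 0 \<and> dist x 0 < d"
    hence xr: "\<bar>x\<bar> < r" and xc: "\<bar>x\<bar> < c / (\<bar>C\<bar> + 1)" by (auto simp: d_def)
    have "(\<bar>C\<bar> + 1) * \<bar>x\<bar> \<le> c" using xc by (simp add: field_simps)
    hence Cx: "\<bar>C\<bar> * \<bar>x\<bar> \<le> c" by (smt (verit) abs_ge_zero mult_nonneg_nonneg distrib_right)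
    have "\<bar>g x\<bar> \<le> C * \<bar>x\<bar>^3" using assms(2)[OF xr] .
    also have "\<dots> \<le> \<bar>C\<bar> * \<bar>x\<bar>^3" by (intro mult_right_mono) auto
    also have "\<bar>x\<bar>^3 = \<bar>x\<bar> * (\<bar>x\<bar> * \<bar>x\<bar>)" by (simp add: power3_eq_cube)
    also have "\<bar>x\<bar> * \<bar>x\<bar> = x^2" by (simp add: power2_eq_square)
    also have "\<bar>C\<bar> * (\<bar>x\<bar> * x^2) = (\<bar>C\<bar> * \<bar>x\<bar>) * x^2" by simp
    also have "\<dots> \<le> c * x^2" by (rule mult_right_mono[OF Cx]) simp
    finally show "norm (g x) \<le> c * norm (x^2)" by simp
  qed
  then show "eventually (\<lambda>x. norm (g x) \<le> c * norm (x^2)) (at 0)"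
    unfolding eventually_at using d by blast
qed



lemma W_bound2:
  fixes z :: "'a::real_normed_field"
  assumes S: "S > 0" and phi: "\<bar>\<phi>\<bar> < 1" and m: "m \<le> 2"
  and z: "norm z \<le> S * (1 - \<bar>\<phi>\<bar>) / 6 * (1 - (1 + \<bar>\<phi>\<bar>)/2)"
  shows "norm (WU S m \<phi> z n) \<le> norm z * ((1 + \<bar>\<phi>\<bar>)/2)^n"
    "norm (WS S m \<phi> z n) \<le> norm z / (1 - (1+\<bar>\<phi>\<bar>)/2)"
    "norm z / (1 - (1+\<bar>\<phi>\<bar>)/2) \<le> S * (1 - \<bar>\<phi>\<bar>) / 6"
proof -
  define q where "q = (1+\<bar>\<phi>\<bar>)/2"
  have q1: "q < 1" "0 \<le> q" using phi by (auto simp: q_def)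
  note B = W_bound[OF S phi m z, of n, folded q_def]
  show "norm (WU S m \<phi> z n) \<le> norm z * ((1 + \<bar>\<phi>\<bar>)/2)^n" using B by (simp add: q_def)
  have "norm z * (1 - q^Suc n) / (1 - q) \<le> norm z / (1-q)"
  proof (rule divide_right_mono)
    have "0 \<le> q^Suc n" using q1 by simp
    then show "norm z * (1 - q^Suc n) \<le> norm z" by (intro mult_left_le) auto
  qed (use q1 in simp)
  then show "norm (WS S m \<phi> z n) \<le> norm z / (1 - (1+\<bar>\<phi>\<bar>)/2)" using B by (simp add: q_def)
  show "norm z / (1 - (1+\<bar>\<phi>\<bar>)/2) \<le> S * (1 - \<bar>\<phi>\<bar>) / 6"
    using z q1 by (simp add: pos_divide_le_eq q_def)
qed

lemma scen_eq:
  fixes x S \<phi> :: real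
  assumes S: "S > 0" and phi: "\<bar>\<phi>\<bar> < 1" and ze: "\<zeta> \<le> 1"
  and x: "\<bar>x\<bar> \<le> S * (1 - \<bar>\<phi>\<bar>) / 6 * (1 - (1 + \<bar>\<phi>\<bar>)/2)"
  shows "scen_u S \<zeta> \<phi> x n = WU S (1+\<zeta>) \<phi> x n \<and> scen_s S \<zeta> \<phi> x n = WS S (1+\<zeta>) \<phi> x n"
proof -
  define \<delta> where "\<delta> = S * (1 - \<bar>\<phi>\<bar>) / 6"
  have m: "1 + \<zeta> \<le> 2" using ze by simp
  have x': "norm x \<le> S * (1 - \<bar>\<phi>\<bar>) / 6 * (1 - (1 + \<bar>\<phi>\<bar>)/2)" using x by simp
  note B = W_bound2[OF S phi m x']
  have q1: "(1 + \<bar>\<phi>\<bar>)/2 < 1" "0 \<le> (1 + \<bar>\<phi>\<bar>)/2" using phi by auto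
  have "\<bar>x\<bar> \<le> \<bar>x\<bar> / (1 - (1 + \<bar>\<phi>\<bar>)/2)" using q1 phi by (simp add: le_divide_eq mult_left_le)
  also have "\<dots> \<le> \<delta>" using B(3) by (simp add: \<delta>_def)
  finally have xd: "\<bar>x\<bar> \<le> \<delta>" .
  have d2: "2 * \<delta> \<le> S" using S phi by (simp add: \<delta>_def)
  show ?thesis
  proof (induction n)
    case 0
    have "x \<ge> -S" using xd d2 \<delta>_def S phi by linarith
    then show ?case by (simp add: scen_u_def scen_s_def)
  next
    case (Suc n)
    have "norm (WS S (1+\<zeta>) \<phi> x n) \<le> \<delta>" using B(2)[of n] B(3) unfolding \<delta>_def by linarith
    hence sb: "\<bar>WS S (1+\<zeta>) \<phi> x n\<bar> \<le> \<delta>" by simp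
    have "\<bar>WU S (1+\<zeta>) \<phi> x (Suc n)\<bar> \<le> \<bar>x\<bar> * ((1 + \<bar>\<phi>\<bar>)/2)^Suc n" using B(1)[of "Suc n"] by simp
    also have "\<dots> \<le> \<bar>x\<bar> * 1" using q1 by (intro mult_left_mono power_le_one) auto
    finally have ub: "\<bar>WU S (1+\<zeta>) \<phi> x (Suc n)\<bar> \<le> \<delta>" using xd by linarith
    have ge: "\<phi> * (1 + WS S (1+\<zeta>) \<phi> x n / S) ^ (1 + \<zeta>) * WU S (1+\<zeta>) \<phi> x n \<ge> - WS S (1+\<zeta>) \<phi> x n - S"
      using ub sb d2 by (simp add: W_Suc)
    have "scen_u S \<zeta> \<phi> x (Suc n) = WU S (1+\<zeta>) \<phi> x (Suc n)"
      using Suc ge by (simp add: scen_u_def scen_s_def Let_def W_Suc)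
    moreover have "scen_s S \<zeta> \<phi> x (Suc n) = WS S (1+\<zeta>) \<phi> x (Suc n)"
      using Suc ge by (simp add: scen_u_def scen_s_def Let_def W_Suc)
    ultimately show ?case by simp
  qed
qed



lemma poly1: fixes t :: real assumes "m = 1 \<or> m = 2" shows "\<bar>(1+t)^m - 1 - real m * t\<bar> \<le> t^2"
  using assms by (auto simp: power2_eq_square algebra_simps)

lemma poly2: fixes t :: real assumes "m = 1 \<or> m = 2" "\<bar>t\<bar> \<le> 1" shows "\<bar>(1+t)^m - 1\<bar> \<le> 3 * \<bar>t\<bar>"
proof (cases "m = 1")
  case True then show ?thesis by simp
next
  case False
  then have m: "m = 2" using assms by auto
  have "\<bar>t\<bar> * \<bar>t\<bar> \<le> \<bar>t\<bar>" by (rule mult_left_le_one_le) (use assms in auto)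
  hence "\<bar>t * t\<bar> \<le> \<bar>t\<bar>" by (simp add: abs_mult)
  moreover have "(1+t)^m - 1 = 2*t + t*t" by (simp add: m power2_eq_square algebra_simps)
  ultimately show ?thesis by linarith
qed

lemma tau_aux: fixes a b c f :: real assumes "a\<noteq>0" "b\<noteq>0" shows "c/a*(1/a) - c/a*f*(1/(a*b)) = c*(b-f)/(a^2*b)"
proof -
  have 1: "c/a*(1/a) = c*b/(a^2*b)" using assms by (simp add: power2_eq_square)
  have 2: "c/a*f*(1/(a*b)) = c*f/(a^2*b)" by (simp add: power2_eq_square mult.commute mult.left_commute)
  show ?thesis unfolding 1 2 by (simp add: diff_divide_distrib right_diff_distrib)
qed

lemma alg1: fixes X K a b P :: real assumes "a\<noteq>0" "b\<noteq>0"
  shows "(X/a)*(K*X^2*P) + (K*X^2/b)*(P*X) = (K*X^3*(1/a+1/b))*P"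
  using assms by (simp add: field_simps power2_eq_square power3_eq_cube)

lemma alg2: fixes x a b S M :: real assumes "a\<noteq>0" "b\<noteq>0"
  shows "(x/a + (1/S)*(M/(a^3*b))*x^2)*a = x + (M/S)*(x^2/(a^2*b))"
  using assms by (simp add: field_simps power2_eq_square power3_eq_cube)

lemma asym:
  fixes S \<phi> :: real and m :: nat
  assumes S: "S>0" and phi: "\<bar>\<phi>\<bar><1" and m: "m=1 \<or> m=2"
  shows "\<exists>C. \<forall>x::real. \<bar>x\<bar> \<le> S * (1 - \<bar>\<phi>\<bar>) / 6 * (1 - (1 + \<bar>\<phi>\<bar>)/2) \<longrightarrow>
     summable (WU S m \<phi> x) \<and>
     \<bar>(\<Sum>n. WU S m \<phi> x n) - (x/(1-\<phi>) + (1/S)*(real m*\<phi>/((1-\<phi>)^3*(1+\<phi>)))*x^2)\<bar> \<le> C*\<bar>x\<bar>^3"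
proof -
  define q where "q = (1+\<bar>\<phi>\<bar>)/2"
  define p where "p = (1+q)/2"
  define K where "K = 3/((1-q)*S*(p-q))"
  define C1 where "C1 = K*(1/(1-q)+1/(1-p))/(1-p)"
  define C2 where "C2 = 1/((1-q)*S)^2/(1-q)"
  define C where "C = (2/S*C1 + C2)/(1-\<phi>)"
  have q1: "q < 1" "0 \<le> q" "\<bar>\<phi>\<bar> \<le> q" using phi by (auto simp: q_def)
  have p1: "q < p" "p < 1" "0 \<le> p" using q1 by (auto simp: p_def)
  have K0: "K \<ge> 0" using p1 q1 S by (simp add: K_def)
  have Kpq: "K*(p-q) = 3/((1-q)*S)" unfolding K_def using p1 by (simp only: times_divide_eq_left mult.assoc[symmetric] nonzero_mult_divide_mult_cancel_right)
  hence "K*p - K*q = 3/((1-q)*S)" by (simp add: right_diff_distrib)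
  hence Kp: "q * K + 3/((1-q)*S) = K * p" by (simp add: mult.commute)
  have m2: "m \<le> 2" using m by auto
  have phi1: "1 - \<phi> > 0" "1 + \<phi> > 0" using phi by auto
  show ?thesis
  proof (intro exI[of _ C] allI impI)
    fix x :: real
    assume x: "\<bar>x\<bar> \<le> S * (1 - \<bar>\<phi>\<bar>) / 6 * (1 - (1 + \<bar>\<phi>\<bar>)/2)"
    define u where "u = WU S m \<phi> x"
    define s where "s = WS S m \<phi> x"
    have x': "norm x \<le> S * (1 - \<bar>\<phi>\<bar>) / 6 * (1 - (1 + \<bar>\<phi>\<bar>)/2)" using x by simp
    note B = W_bound2[OF S phi m2 x', folded q_def]
    have hu: "\<bar>u n\<bar> \<le> \<bar>x\<bar> * q^n" for n using B(1)[of n] by (simp add: u_def)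
    have hs: "\<bar>s n\<bar> \<le> \<bar>x\<bar> / (1-q)" for n using B(2)[of n] by (simp add: s_def)
    have xS: "\<bar>x\<bar> / (1-q) \<le> S" proof -
      have "S * (1 - \<bar>\<phi>\<bar>) / 6 \<le> S" using S phi by simp
      moreover have "norm x / (1-q) = \<bar>x\<bar> / (1-q)" by simp
      ultimately show ?thesis using B(3) by linarith
    qed
    have tb: "\<bar>s n / S\<bar> \<le> \<bar>x\<bar> / ((1-q)*S)" for n
      using hs[of n] S by (simp add: abs_divide divide_right_mono flip: divide_divide_eq_left)
    have tb1: "\<bar>s n / S\<bar> \<le> 1" for n
      using hs[of n] xS S by (simp add: abs_divide)
    have rec: "u (Suc n) = \<phi> * (1 + s n / S)^m * u n" for n by (simp add: u_def s_def W_Suc)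
    have u0: "u 0 = x" by (simp add: u_def)
    have hd: "\<bar>u n - \<phi>^n * x\<bar> \<le> K * x^2 * p^n" for n
    proof (induction n)
      case 0 then show ?case using K0 by (simp add: u0)
    next
      case (Suc n)
      define t where "t = s n / S"
      have eq: "u (Suc n) - \<phi>^Suc n * x = \<phi> * (u n - \<phi>^n * x) + \<phi> * ((1+t)^m - 1) * u n"
        by (simp add: rec t_def algebra_simps)
      have a1: "\<bar>\<phi> * (u n - \<phi>^n * x)\<bar> \<le> q * (K * x^2 * p^n)"
        unfolding abs_mult using Suc q1 by (intro mult_mono) auto
      have "\<bar>(1+t)^m - 1\<bar> \<le> 3 * \<bar>t\<bar>" using poly2[OF m tb1[of n]] by (simp add: t_def)
      also have "\<dots> \<le> 3 * (\<bar>x\<bar> / ((1-q)*S))" using tb[of n] by (simp add: t_def)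
      finally have pb: "\<bar>(1+t)^m - 1\<bar> \<le> 3 * (\<bar>x\<bar> / ((1-q)*S))" .
      have "\<bar>\<phi> * ((1+t)^m - 1) * u n\<bar> \<le> 1 * (3 * (\<bar>x\<bar> / ((1-q)*S))) * (\<bar>x\<bar> * q^n)"
        unfolding abs_mult using phi pb hu[of n] by (intro mult_mono) auto
      also have "\<dots> \<le> 1 * (3 * (\<bar>x\<bar> / ((1-q)*S))) * (\<bar>x\<bar> * p^n)"
        using q1 p1 S by (intro mult_left_mono power_mono) auto
      also have "\<dots> = 3/((1-q)*S) * x^2 * p^n" by (simp add: power2_eq_square abs_mult_self_eq)
      finally have a2: "\<bar>\<phi> * ((1+t)^m - 1) * u n\<bar> \<le> 3/((1-q)*S) * x^2 * p^n" .
      have "\<bar>u (Suc n) - \<phi>^Suc n * x\<bar> \<le> q * (K * x^2 * p^n) + 3/((1-q)*S) * x^2 * p^n"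
        unfolding eq using a1 a2 abs_triangle_ineq[of "\<phi> * (u n - \<phi>^n * x)" "\<phi> * ((1+t)^m - 1) * u n"] by linarith
      also have "\<dots> = (q * K + 3/((1-q)*S)) * x^2 * p^n" by (simp add: algebra_simps)
      also have "\<dots> = K * x^2 * p^Suc n" unfolding Kp by simp
      finally show ?case .
    qed
    have su: "summable u" using geo_bound(1)[of u "\<bar>x\<bar>" q] hu q1 by auto
    define e where "e n = u (Suc n) - \<phi>*u n - (\<phi>*real m/S)*(s n*u n)" for n
    have eeq: "e n = \<phi>*u n*((1+s n/S)^m - 1 - real m*(s n/S))" for n
      using S by (simp add: e_def rec field_simps)
    have eb: "\<bar>e n\<bar> \<le> (\<bar>x\<bar>^3/((1-q)*S)^2) * q^n" for n
    proof -
      have t2: "(s n/S)^2 \<le> (\<bar>x\<bar>/((1-q)*S))^2"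
      proof -
        have "\<bar>s n/S\<bar>^2 \<le> (\<bar>x\<bar>/((1-q)*S))^2" by (rule power_mono[OF tb]) simp
        thus ?thesis by (simp only: power2_abs)
      qed
      have "\<bar>e n\<bar> = \<bar>\<phi>\<bar>*\<bar>u n\<bar>*\<bar>(1+s n/S)^m - 1 - real m*(s n/S)\<bar>" by (simp add: eeq abs_mult)
      also have "\<dots> \<le> 1*(\<bar>x\<bar>*q^n)*(\<bar>x\<bar>/((1-q)*S))^2"
        using phi hu[of n] poly1[OF m, of "s n/S"] t2 by (intro mult_mono) auto
      also have "\<dots> = (\<bar>x\<bar>^3/((1-q)*S)^2) * q^n" by (simp add: power2_eq_square power3_eq_cube field_simps)
      finally show ?thesis .
    qed
    have se: "summable e" and Eb: "\<bar>suminf e\<bar> \<le> (\<bar>x\<bar>^3/((1-q)*S)^2)/(1-q)"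
      using geo_bound[of e "\<bar>x\<bar>^3/((1-q)*S)^2" q] eb q1 by auto
    define g where "g n = s n * u n" for n
    have gb: "\<bar>g n\<bar> \<le> (\<bar>x\<bar>/(1-q)*\<bar>x\<bar>) * q^n" for n
    proof -
      have "\<bar>s n\<bar>*\<bar>u n\<bar> \<le> (\<bar>x\<bar>/(1-q))*(\<bar>x\<bar>*q^n)" using hs[of n] hu[of n] q1 by (intro mult_mono) auto
      thus ?thesis by (simp add: g_def abs_mult mult.assoc)
    qed
    have sg: "summable g" using geo_bound(1)[of g "\<bar>x\<bar>/(1-q)*\<bar>x\<bar>" q] gb q1 by auto
    define \<sigma> where "\<sigma> n = (\<Sum>k\<le>n. \<phi>^k * x)" for n
    have sd: "\<bar>s n - \<sigma> n\<bar> \<le> K*x^2/(1-p)" for n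
    proof -
      have "s n - \<sigma> n = (\<Sum>k\<le>n. u k - \<phi>^k * x)"
        by (simp add: s_def u_def \<sigma>_def WS_sum sum_subtractf)
      also have "\<bar>\<dots>\<bar> \<le> (\<Sum>k\<le>n. \<bar>u k - \<phi>^k * x\<bar>)" by (rule sum_abs)
      also have "\<dots> \<le> (\<Sum>k\<le>n. K*x^2*p^k)" by (rule sum_mono) (rule hd)
      also have "\<dots> = K*x^2*(\<Sum>k\<le>n. p^k)" by (simp add: sum_distrib_left)
      also have "(\<Sum>k\<le>n. p^k) \<le> (\<Sum>k. p^k)"
        using p1 by (intro sum_le_suminf summable_geometric) auto
      also have "(\<Sum>k. p^k) = 1/(1-p)" using p1 by (simp add: suminf_geometric)
      finally show ?thesis using K0 by (simp add: mult_left_mono)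
    qed
    define h where "h n = \<sigma> n * (\<phi>^n * x)" for n
    have \<sigma>eq: "\<sigma> n = x*(1-\<phi>^Suc n)/(1-\<phi>)" for n
    proof -
      have "(1-\<phi>)*\<sigma> n = x*((1-\<phi>)*(\<Sum>k\<le>n. \<phi>^k))" by (simp add: \<sigma>_def sum_distrib_right sum_distrib_left algebra_simps)
      also have "\<dots> = x*(1-\<phi>^Suc n)" by (simp only: sum_gp_basic)
      finally show ?thesis using phi1 by (simp add: field_simps)
    qed
    have heq: "h n = x^2/(1-\<phi>) * \<phi>^n - x^2/(1-\<phi>)*\<phi> * (\<phi>^2)^n" for n
    proof -
      have pp: "\<phi>^Suc n * \<phi>^n = \<phi>*(\<phi>^2)^n" by (simp add: power2_eq_square power_mult_distrib)
      have "h n = x^2/(1-\<phi>) * (\<phi>^n - \<phi>^Suc n * \<phi>^n)"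
        using phi1 by (simp add: h_def \<sigma>eq power2_eq_square field_simps)
      then show ?thesis unfolding pp by (simp add: algebra_simps)
    qed
    have g1: "(\<lambda>n. \<phi>^n) sums (1/(1-\<phi>))" using phi by (intro geometric_sums) simp
    have g2: "(\<lambda>n. (\<phi>^2)^n) sums (1/(1-\<phi>^2))"
    proof (rule geometric_sums)
      have "\<bar>\<phi>\<bar>^2 < 1" using phi by (simp add: abs_square_less_1)
      then show "norm (\<phi>^2) < 1" by simp
    qed
    have hs': "h sums (x^2/(1-\<phi>)*(1/(1-\<phi>)) - x^2/(1-\<phi>)*\<phi>*(1/(1-\<phi>^2)))"
      unfolding heq by (intro sums_diff sums_mult g1 g2)
    have tau: "x^2/(1-\<phi>)*(1/(1-\<phi>)) - x^2/(1-\<phi>)*\<phi>*(1/(1-\<phi>^2)) = x^2/((1-\<phi>)^2*(1+\<phi>))"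
    proof -
      have a: "1-\<phi> \<noteq> 0" "1+\<phi> \<noteq> 0" using phi1 by auto
      have "1-\<phi>^2 = (1-\<phi>)*(1+\<phi>)" by (simp add: power2_eq_square algebra_simps)
      then have "x^2/(1-\<phi>)*(1/(1-\<phi>)) - x^2/(1-\<phi>)*\<phi>*(1/(1-\<phi>^2))
         = x^2/(1-\<phi>)*(1/(1-\<phi>)) - x^2/(1-\<phi>)*\<phi>*(1/((1-\<phi>)*(1+\<phi>)))" by simp
      also have "\<dots> = x^2 * ((1+\<phi>) - \<phi>)/((1-\<phi>)^2*(1+\<phi>))" by (rule tau_aux[OF a])
      also have "\<dots> = x^2/((1-\<phi>)^2*(1+\<phi>))" by simp
      finally show ?thesis .
    qed
    have hsum: "h sums (x^2/((1-\<phi>)^2*(1+\<phi>)))" using hs' tau by simp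
    have ghb: "\<bar>g n - h n\<bar> \<le> (K*\<bar>x\<bar>^3*(1/(1-q)+1/(1-p))) * p^n" for n
    proof -
      have ge: "g n - h n = s n*(u n - \<phi>^n*x) + (s n - \<sigma> n)*(\<phi>^n*x)" by (simp add: g_def h_def algebra_simps)
      have b1: "\<bar>s n*(u n - \<phi>^n*x)\<bar> \<le> (\<bar>x\<bar>/(1-q))*(K*x^2*p^n)"
        unfolding abs_mult using hs[of n] hd[of n] by (intro mult_mono) auto
      have pn: "\<bar>\<phi>\<bar>^n \<le> p^n" using q1 p1 by (intro power_mono) auto
      have "\<bar>\<phi>^n*x\<bar> \<le> p^n*\<bar>x\<bar>" unfolding abs_mult power_abs using pn by (intro mult_right_mono) auto
      hence b2: "\<bar>(s n - \<sigma> n)*(\<phi>^n*x)\<bar> \<le> (K*x^2/(1-p))*(p^n*\<bar>x\<bar>)"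
        unfolding abs_mult[of "s n - \<sigma> n"] using sd[of n] by (intro mult_mono) auto
      have "\<bar>g n - h n\<bar> \<le> (\<bar>x\<bar>/(1-q))*(K*x^2*p^n) + (K*x^2/(1-p))*(p^n*\<bar>x\<bar>)"
        unfolding ge using b1 b2 abs_triangle_ineq[of "s n*(u n - \<phi>^n*x)" "(s n - \<sigma> n)*(\<phi>^n*x)"] by linarith
      also have "\<dots> = (K*\<bar>x\<bar>^3*(1/(1-q)+1/(1-p))) * p^n"
      proof -
        have x2: "x^2 = \<bar>x\<bar>^2" by simp
        have "1-q \<noteq> 0" "1-p \<noteq> 0" using q1 p1 by auto
        then show ?thesis unfolding x2 by (rule alg1)
      qed
      finally show ?thesis .
    qed
    have sgh: "summable (\<lambda>n. g n - h n)" and Tb: "\<bar>(\<Sum>n. g n - h n)\<bar> \<le> (K*\<bar>x\<bar>^3*(1/(1-q)+1/(1-p)))/(1-p)"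
      using geo_bound[of "\<lambda>n. g n - h n" "K*\<bar>x\<bar>^3*(1/(1-q)+1/(1-p))" p] ghb p1 by auto
    have Tdiff: "suminf g - x^2/((1-\<phi>)^2*(1+\<phi>)) = (\<Sum>n. g n - h n)"
      using suminf_diff[OF sg sums_summable[OF hsum]] sums_unique[OF hsum] by simp
    define f where "f = suminf u"
    define T where "T = suminf g"
    define E where "E = suminf e"
    define \<tau> where "\<tau> = x^2/((1-\<phi>)^2*(1+\<phi>))"
    define c where "c = \<phi>*real m/S"
    have pt: "u (Suc n) = (\<phi>*u n + c*g n) + e n" for n by (simp add: e_def g_def c_def)
    have s1: "summable (\<lambda>n. \<phi>*u n + c*g n)" by (intro summable_add summable_mult su sg)
    have "(\<Sum>n. u (Suc n)) = (\<Sum>n. (\<phi>*u n + c*g n) + e n)" unfolding pt ..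
    also have "\<dots> = (\<Sum>n. \<phi>*u n + c*g n) + E" unfolding E_def by (rule suminf_add[OF s1 se, symmetric])
    also have "(\<Sum>n. \<phi>*u n + c*g n) = \<phi>*f + c*T"
      unfolding f_def T_def using su sg by (simp add: suminf_add[symmetric] suminf_mult summable_mult)
    finally have main0: "(\<Sum>n. u (Suc n)) = \<phi>*f + c*T + E" .
    have "(\<Sum>n. u (Suc n)) = f - x" unfolding f_def using suminf_split_head[OF su] u0 by simp
    with main0 have main: "f*(1-\<phi>) = x + c*T + E" by (simp add: algebra_simps)
    have tg: "(x/(1-\<phi>) + (1/S)*(real m*\<phi>/((1-\<phi>)^3*(1+\<phi>)))*x^2)*(1-\<phi>) = x + c*\<tau>"
    proof -
      have "(x/(1-\<phi>) + (1/S)*(real m*\<phi>/((1-\<phi>)^3*(1+\<phi>)))*x^2)*(1-\<phi>) = x + (real m*\<phi>/S)*(x^2/((1-\<phi>)^2*(1+\<phi>)))"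
        by (rule alg2) (use phi1 in auto)
      thus ?thesis by (simp add: c_def \<tau>_def mult.commute)
    qed
    define D where "D = f - (x/(1-\<phi>) + (1/S)*(real m*\<phi>/((1-\<phi>)^3*(1+\<phi>)))*x^2)"
    have DD: "D*(1-\<phi>) = c*(T-\<tau>) + E" unfolding D_def left_diff_distrib main tg by (simp add: algebra_simps)
    have TT: "\<bar>T - \<tau>\<bar> \<le> C1*\<bar>x\<bar>^3" using Tb Tdiff unfolding T_def \<tau>_def C1_def by (simp add: mult.commute mult.left_commute)
    have EE: "\<bar>E\<bar> \<le> C2*\<bar>x\<bar>^3" using Eb unfolding E_def C2_def by (simp add: mult.commute)
    have cc: "\<bar>c\<bar> \<le> 2/S"
    proof -
      have "\<bar>\<phi>\<bar> * real m \<le> 1 * 2" using phi m2 by (intro mult_mono) auto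
      thus ?thesis using S by (simp add: c_def abs_mult divide_right_mono)
    qed
    have C10: "C1 \<ge> 0" using K0 p1 q1 by (simp add: C1_def)
    have "\<bar>c*(T-\<tau>)\<bar> \<le> 2/S*(C1*\<bar>x\<bar>^3)" unfolding abs_mult using cc TT C10 S by (intro mult_mono) auto
    hence "\<bar>D*(1-\<phi>)\<bar> \<le> (2/S*C1 + C2)*\<bar>x\<bar>^3" unfolding DD using EE abs_triangle_ineq[of "c*(T-\<tau>)" E]
      by (simp add: algebra_simps)
    hence "\<bar>D\<bar>*(1-\<phi>) \<le> (2/S*C1 + C2)*\<bar>x\<bar>^3" using phi1 by (simp add: abs_mult)
    hence "\<bar>D\<bar> \<le> C*\<bar>x\<bar>^3" using phi1 unfolding C_def by (simp add: pos_le_divide_eq mult.commute mult.left_commute)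
    then show "summable u \<and> \<bar>(\<Sum>n. u n) - (x/(1-\<phi>) + (1/S)*(real m*\<phi>/((1-\<phi>)^3*(1+\<phi>)))*x^2)\<bar> \<le> C*\<bar>x\<bar>^3"
      using su unfolding D_def f_def by simp
  qed
qed



lemma W_holo: "(\<lambda>z. WU S m \<phi> z n) holomorphic_on UNIV \<and> (\<lambda>z. WS S m \<phi> z n) holomorphic_on UNIV"
proof (induction n)
  case 0 then show ?case by (simp add: holomorphic_on_id)
next
  case (Suc n)
  have hu: "(\<lambda>z. WU S m \<phi> z (Suc n)) holomorphic_on UNIV"
    unfolding W_Suc using Suc by (intro holomorphic_intros) auto
  have "(\<lambda>z. WS S m \<phi> z n + WU S m \<phi> z (Suc n)) holomorphic_on UNIV"
    using Suc hu by (intro holomorphic_intros) auto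
  then show ?case using hu unfolding W_Suc(2) by simp
qed

lemma W_of_real: "WU S m \<phi> (complex_of_real x) n = of_real (WU S m \<phi> x n) \<and>
    WS S m \<phi> (complex_of_real x) n = of_real (WS S m \<phi> x n)"
  by (induction n) (simp_all add: W_Suc)

lemma complex_part:
  fixes S \<phi> :: real and m :: nat
  assumes S: "S>0" and phi: "\<bar>\<phi>\<bar><1" and m2: "m \<le> 2"
  defines "r0 \<equiv> S * (1 - \<bar>\<phi>\<bar>) / 6 * (1 - (1 + \<bar>\<phi>\<bar>)/2)"
  shows "\<exists>a::nat\<Rightarrow>real. \<forall>x\<in>{-r0<..<r0}. (\<lambda>k. a k * x^k) sums (\<Sum>n. WU S m \<phi> x n)"
proof -
  define q where "q = (1 + \<bar>\<phi>\<bar>)/2"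
  have q1: "q < 1" "0 \<le> q" using phi by (auto simp: q_def)
  define F where "F z = (\<Sum>n. WU S m \<phi> z n)" for z :: complex
  have bd: "norm (WU S m \<phi> z n) \<le> r0 * q^n" if "z \<in> cball 0 r0" for z :: complex and n
  proof -
    have z: "norm z \<le> r0" using that by simp
    have "norm (WU S m \<phi> z n) \<le> norm z * q^n"
      using W_bound2(1)[OF S phi m2, of z n] z by (simp add: r0_def q_def)
    also have "\<dots> \<le> r0 * q^n" using z q1 by (intro mult_right_mono) auto
    finally show ?thesis .
  qed
  have sm: "summable (\<lambda>n. r0 * q^n)" using q1 by (intro summable_mult summable_geometric) auto
  have ul: "uniform_limit (cball 0 r0) (\<lambda>n z. \<Sum>i<n. WU S m \<phi> z i) F sequentially"
    unfolding F_def by (rule Weierstrass_m_test[OF bd sm])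
  have ev: "eventually (\<lambda>n. continuous_on (cball 0 r0) (\<lambda>z::complex. \<Sum>i<n. WU S m \<phi> z i) \<and>
              (\<lambda>z::complex. \<Sum>i<n. WU S m \<phi> z i) holomorphic_on ball 0 r0) sequentially"
  proof (intro always_eventually allI conjI)
    fix n
    have h: "(\<lambda>z::complex. \<Sum>i<n. WU S m \<phi> z i) holomorphic_on UNIV"
      using W_holo by (intro holomorphic_on_sum) auto
    show "(\<lambda>z::complex. \<Sum>i<n. WU S m \<phi> z i) holomorphic_on ball 0 r0" by (rule holomorphic_on_subset[OF h]) auto
    show "continuous_on (cball 0 r0) (\<lambda>z::complex. \<Sum>i<n. WU S m \<phi> z i)"
    proof -
      have "(\<lambda>z::complex. \<Sum>i<n. WU S m \<phi> z i) holomorphic_on cball 0 r0" by (rule holomorphic_on_subset[OF h]) auto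
      then show ?thesis by (rule holomorphic_on_imp_continuous_on)
    qed
  qed
  obtain hF: "F holomorphic_on ball 0 r0"
    using holomorphic_uniform_limit[OF ev ul] by auto
  define c where "c n = (deriv ^^ n) F 0 / fact n" for n
  show ?thesis
  proof (intro exI[of _ "\<lambda>n. Re (c n)"] ballI)
    fix x :: real assume x: "x \<in> {-r0<..<r0}"
    have xb: "complex_of_real x \<in> ball 0 r0" using x by auto
    have ps: "(\<lambda>n. c n * (complex_of_real x - 0)^n) sums F (complex_of_real x)"
      unfolding c_def by (rule holomorphic_power_series[OF hF xb])
    have xr: "norm x \<le> S * (1 - \<bar>\<phi>\<bar>) / 6 * (1 - (1 + \<bar>\<phi>\<bar>)/2)" using x by (auto simp: r0_def)
    have su: "summable (WU S m \<phi> x)"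
    proof (rule summable_comparison_test[OF _ summable_mult[OF summable_geometric[of q]]])
      show "\<exists>N. \<forall>n\<ge>N. norm (WU S m \<phi> x n) \<le> norm x * q^n"
        using W_bound2(1)[OF S phi m2 xr] by (auto simp: q_def)
    qed (use q1 in auto)
    have "F (complex_of_real x) = (\<Sum>n. complex_of_real (WU S m \<phi> x n))"
      by (simp add: F_def W_of_real)
    also have "\<dots> = complex_of_real (\<Sum>n. WU S m \<phi> x n)"
      by (rule suminf_of_real[OF su, symmetric])
    finally have Fx: "F (complex_of_real x) = complex_of_real (\<Sum>n. WU S m \<phi> x n)" .
    have "(\<lambda>n. Re (c n * (complex_of_real x - 0)^n)) sums Re (F (complex_of_real x))"
      by (rule sums_Re[OF ps])
    then show "(\<lambda>k. Re (c k) * x^k) sums (\<Sum>n. WU S m \<phi> x n)"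
      unfolding Fx by (simp flip: of_real_power)
  qed
qed



theorem proposition4p4:
  fixes S \<phi> :: real and \<zeta> :: nat
  assumes "S > 0" and "\<zeta> \<in> {0, 1}" and "-1 < \<phi>" and "\<phi> < 1"
  shows "\<exists>R > 0.
     (\<forall>x \<in> {-R<..<R}. scen_regular S \<zeta> \<phi> x \<and> summable (scen_u S \<zeta> \<phi> x)) \<and>
     (\<exists>a :: nat \<Rightarrow> real. \<forall>x \<in> {-R<..<R}.
        (\<lambda>k. a k * x ^ k) sums (\<Sum>n. scen_u S \<zeta> \<phi> x n)) \<and>
     (\<lambda>x. (\<Sum>n. scen_u S \<zeta> \<phi> x n)
          - (x / (1 - \<phi>) + (1 / S) * ((1 + real \<zeta>) * \<phi> / ((1 - \<phi>) ^ 3 * (1 + \<phi>))) * x ^ 2))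
       \<in> o[at (0::real)](\<lambda>x. x ^ 2)"
proof -
  have S: "S > 0" using assms by simp
  have phi: "\<bar>\<phi>\<bar> < 1" using assms by auto
  have ze: "\<zeta> \<le> 1" using assms by auto
  define m where "m = 1 + \<zeta>"
  have m: "m = 1 \<or> m = 2" using assms by (auto simp: m_def)
  have m2: "m \<le> 2" using m by auto
  define r0 where "r0 = S * (1 - \<bar>\<phi>\<bar>) / 6 * (1 - (1 + \<bar>\<phi>\<bar>)/2)"
  have r0: "r0 > 0" using S phi by (simp add: r0_def)
  have equ: "scen_u S \<zeta> \<phi> x = WU S m \<phi> x" if "\<bar>x\<bar> \<le> r0" for x
    using scen_eq[OF S phi ze that[unfolded r0_def]] by (auto simp: m_def)
  have eqs: "scen_s S \<zeta> \<phi> x n = WS S m \<phi> x n" if "\<bar>x\<bar> \<le> r0" for x n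
    using scen_eq[OF S phi ze that[unfolded r0_def]] by (auto simp: m_def)
  obtain C where C: "\<And>x::real. \<bar>x\<bar> \<le> r0 \<Longrightarrow> summable (WU S m \<phi> x) \<and>
     \<bar>(\<Sum>n. WU S m \<phi> x n) - (x/(1-\<phi>) + (1/S)*(real m*\<phi>/((1-\<phi>)^3*(1+\<phi>)))*x^2)\<bar> \<le> C*\<bar>x\<bar>^3"
    using asym[OF S phi m] unfolding r0_def by blast
  obtain a where a: "\<forall>x\<in>{-r0<..<r0}. (\<lambda>k. a k * x^k) sums (\<Sum>n. WU S m \<phi> x n)"
    using complex_part[OF S phi m2] unfolding r0_def by blast
  show ?thesis
  proof (intro exI[of _ r0] conjI r0 ballI)
    fix x :: real assume x: "x \<in> {-r0<..<r0}"
    hence xr: "\<bar>x\<bar> \<le> r0" by auto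
    show "summable (scen_u S \<zeta> \<phi> x)" using C[OF xr] equ[OF xr] by simp
    show "scen_regular S \<zeta> \<phi> x"
      unfolding scen_regular_def
    proof
      fix n
      have xr': "norm x \<le> S * (1 - \<bar>\<phi>\<bar>) / 6 * (1 - (1 + \<bar>\<phi>\<bar>)/2)" using xr by (simp add: r0_def)
      note B = W_bound2[OF S phi m2 xr']
      have "S * (1 - \<bar>\<phi>\<bar>) / 6 < S" using S phi by simp
      moreover have "norm x / (1 - (1 + \<bar>\<phi>\<bar>)/2) = \<bar>x\<bar> / (1 - (1 + \<bar>\<phi>\<bar>)/2)" by simp
      moreover have "norm (WS S m \<phi> x n) = \<bar>WS S m \<phi> x n\<bar>" by simp
      ultimately have "\<bar>WS S m \<phi> x n\<bar> < S" using B(2)[of n] B(3) by linarith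
      thus "scen_s S \<zeta> \<phi> x n \<noteq> - S" using eqs[OF xr] by auto
    qed
  next
    show "\<exists>a :: nat \<Rightarrow> real. \<forall>x \<in> {-r0<..<r0}. (\<lambda>k. a k * x ^ k) sums (\<Sum>n. scen_u S \<zeta> \<phi> x n)"
      using a equ by (intro exI[of _ a]) auto
  next
    show "(\<lambda>x. (\<Sum>n. scen_u S \<zeta> \<phi> x n)
          - (x / (1 - \<phi>) + (1 / S) * ((1 + real \<zeta>) * \<phi> / ((1 - \<phi>) ^ 3 * (1 + \<phi>))) * x ^ 2))
       \<in> o[at (0::real)](\<lambda>x. x ^ 2)"
    proof (rule small_o_from_cubic[OF r0])
      fix x :: real assume "\<bar>x\<bar> < r0"
      hence xr: "\<bar>x\<bar> \<le> r0" by simp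
      have rm: "real m = 1 + real \<zeta>" by (simp add: m_def)
      show "\<bar>(\<Sum>n. scen_u S \<zeta> \<phi> x n)
          - (x / (1 - \<phi>) + (1 / S) * ((1 + real \<zeta>) * \<phi> / ((1 - \<phi>) ^ 3 * (1 + \<phi>))) * x ^ 2)\<bar> \<le> C * \<bar>x\<bar>^3"
        using C[OF xr] unfolding equ[OF xr] rm by simp
    qed
  qed
qed

end
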